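(* Let $a,b,c,d>0$, $\mu\in(0,1]$, $u>(c+d)/2$, and consider on $\mathcal{I}=[0,1]^2$ the controlled system $$\dot x=x(1-x)\big[xr(-c+d-a+b)+x(a-b)-r(d+b)+b+u\big]+\mu(1-2x),\qquad \dot r=r(1-r)(2x-1).$$ Let $(x_t^*,1)$ be the equilibrium of this system on the side $\{r=1\}$ with $x_t^*\in(1/2,1)$. Then $(x_t^*,1)$ is locally asymptotically stable, while all other equilibria of the system (if any exist) are unstable.
   Context: For these parameters there is exactly one equilibrium $(x_t^*,1)$ on $\{(x,1):x\in[0,1]\}$ with $x_t^*\in(1/2,1)$; any other equilibria on that side lie in $\{(x,1):x\in(0,1/2)\}$. *)

theory Defs
  imports "HOL-Analysis.Analysis"
begin

definition ctrl_field :: "real \<Rightarrow> real \<Rightarrow> real \<Rightarrow> real \<Rightarrow> real \<Rightarrow> real \<Rightarrow> real \<times> real \<Rightarrow> real \<times> real" where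
  "ctrl_field a b c d \<mu> u = (\<lambda>(x, r).
     (x * (1 - x) * (x * r * (- c + d - a + b) + x * (a - b) - r * (d + b) + b + u) + \<mu> * (1 - 2 * x),
      r * (1 - r) * (2 * x - 1)))"

definition unit_square :: "(real \<times> real) set" where
  "unit_square = {0..1} \<times> {0..1}"

definition is_solution :: "('a::real_normed_vector \<Rightarrow> 'a) \<Rightarrow> 'a set \<Rightarrow> (real \<Rightarrow> 'a) \<Rightarrow> bool" where
  "is_solution f S \<phi> \<longleftrightarrow>
     (\<forall>t\<ge>0. (\<phi> has_vector_derivative f (\<phi> t)) (at t within {0..})) \<and> (\<forall>t\<ge>0. \<phi> t \<in> S)"

definition equilibrium :: "('a::real_normed_vector \<Rightarrow> 'a) \<Rightarrow> 'a set \<Rightarrow> 'a \<Rightarrow> bool" where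
  "equilibrium f S p \<longleftrightarrow> p \<in> S \<and> f p = 0"

definition lyapunov_stable :: "('a::real_normed_vector \<Rightarrow> 'a) \<Rightarrow> 'a set \<Rightarrow> 'a \<Rightarrow> bool" where
  "lyapunov_stable f S p \<longleftrightarrow>
     (\<forall>\<epsilon>>0. \<exists>\<delta>>0. \<forall>\<phi>. is_solution f S \<phi> \<and> dist (\<phi> 0) p < \<delta> \<longrightarrow> (\<forall>t\<ge>0. dist (\<phi> t) p < \<epsilon>))"

definition loc_asympt_stable :: "('a::real_normed_vector \<Rightarrow> 'a) \<Rightarrow> 'a set \<Rightarrow> 'a \<Rightarrow> bool" where
  "loc_asympt_stable f S p \<longleftrightarrow> lyapunov_stable f S p \<and>
     (\<exists>\<delta>>0. \<forall>\<phi>. is_solution f S \<phi> \<and> dist (\<phi> 0) p < \<delta> \<longrightarrow> (\<phi> \<longlongrightarrow> p) at_top)"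

definition unstable :: "('a::real_normed_vector \<Rightarrow> 'a) \<Rightarrow> 'a set \<Rightarrow> 'a \<Rightarrow> bool" where
  "unstable f S p \<longleftrightarrow> \<not> lyapunov_stable f S p"

end

theory Submission
  imports Defs
begin


lemma at_within_Ici_eq:
  fixes t :: real assumes "t \<ge> 0"
  shows "at t within {0..} = at t within {0..t+1}"
  by (rule at_within_nhd[of t "{..<t+1}"]) (use assms in auto)

lemma integral_deriv_Ici:
  fixes h :: "real \<Rightarrow> 'a::banach"
  assumes "continuous_on UNIV h" "t \<ge> 0"
  shows "((\<lambda>\<tau>. integral {0..\<tau>} h) has_vector_derivative h t) (at t within {0..})"
proof -
  have "((\<lambda>\<tau>. integral {0..\<tau>} h) has_vector_derivative h t) (at t within {0..t+1})"
    by (rule integral_has_vector_derivative) (use assms in \<open>auto intro: continuous_on_subset\<close>)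
  then show ?thesis using at_within_Ici_eq[OF assms(2)] by simp
qed

lemma integral_cont_Ici:
  fixes h :: "real \<Rightarrow> 'a::banach"
  assumes "continuous_on UNIV h"
  shows "continuous_on {0..} (\<lambda>\<tau>. integral {0..\<tau>} h)"
  unfolding continuous_on_eq_continuous_within
  using integral_deriv_Ici[OF assms] has_vector_derivative_continuous by (metis atLeast_iff)

lemma global_existence:
  fixes F :: "'a::euclidean_space \<Rightarrow> 'a" and p0 :: 'a
  assumes L: "L > 0" and lip: "\<And>z w. norm (F z - F w) \<le> L * norm (z - w)"
    and bnd: "\<And>z. norm (F z) \<le> M"
  shows "\<exists>\<phi>. \<phi> 0 = p0 \<and> (\<forall>t\<ge>0. (\<phi> has_vector_derivative F (\<phi> t)) (at t within {0..}))"
proof -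
  have contF: "continuous_on UNIV F"
    by (rule lipschitz_on_continuous_on[of L]) (use L lip in \<open>auto intro!: lipschitz_onI simp: dist_norm\<close>)
  have M0: "M \<ge> 0" using bnd[of 0] norm_ge_zero[of "F 0"] by linarith
  define Ig where "Ig g \<tau> = integral {0..\<tau>} (\<lambda>s. F (exp (2 * L * s) *\<^sub>R g s))" for g :: "real \<Rightarrow> 'a" and \<tau>
  define P where "P g t = exp (-(2 * L * max t 0)) *\<^sub>R (p0 + Ig g (max t 0))" for g t
  have hcont: "continuous_on UNIV (\<lambda>s. F (exp (2 * L * s) *\<^sub>R g s))" if "continuous_on UNIV g" for g
    by (intro continuous_on_compose2[OF contF] continuous_intros that) auto
  have Icont: "continuous_on {0..} (Ig g)" if "continuous_on UNIV g" for g
    unfolding Ig_def by (rule integral_cont_Ici[OF hcont[OF that]])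
  have Pcont: "continuous_on UNIV (P g)" if "continuous_on UNIV g" for g
    unfolding P_def
    by (intro continuous_intros continuous_on_compose2[OF Icont[OF that]]) auto
  have Ibound: "norm (Ig g \<tau>) \<le> M * \<tau>" if "continuous_on UNIV g" "\<tau> \<ge> 0" for g \<tau>
  proof -
    have "norm (Ig g \<tau>) \<le> integral {0..\<tau>} (\<lambda>s. M)"
      unfolding Ig_def
      by (rule integral_norm_bound_integral)
        (auto intro!: integrable_continuous_real continuous_on_subset[OF hcont[OF that(1)]] bnd)
    also have "\<dots> = M * \<tau>" using that by simp
    finally show ?thesis .
  qed
  have Pbnd: "norm (P g t) \<le> norm p0 + M / (2 * L)" if "continuous_on UNIV g" for g t
  proof -
    define \<tau> where "\<tau> = max t 0"
    have t0: "\<tau> \<ge> 0" unfolding \<tau>_def by simp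
    have E: "exp (2 * L * \<tau>) \<ge> 1 + 2 * L * \<tau>" by (rule exp_ge_add_one_self)
    have Epos: "exp (2 * L * \<tau>) > 0" by simp
    have "norm (P g t) = exp (-(2 * L * \<tau>)) * norm (p0 + Ig g \<tau>)"
      unfolding P_def \<tau>_def by simp
    also have "\<dots> \<le> exp (-(2 * L * \<tau>)) * (norm p0 + M * \<tau>)"
      by (intro mult_left_mono order.trans[OF norm_triangle_ineq] add_left_mono Ibound that t0) auto
    also have "\<dots> = norm p0 / exp (2 * L * \<tau>) + M * \<tau> / exp (2 * L * \<tau>)"
      by (simp add: exp_minus divide_inverse algebra_simps)
    also have "\<dots> \<le> norm p0 + M / (2 * L)"
    proof (intro add_mono)
      show "norm p0 / exp (2 * L * \<tau>) \<le> norm p0"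
        using E t0 L by (simp add: divide_le_eq mult_le_cancel_left1 mult_left_mono)
      have E2: "2 * L * \<tau> \<le> exp (2 * L * \<tau>)"
        using E by linarith
      have "M * (2 * L * \<tau>) \<le> M * exp (2 * L * \<tau>)" using E2 M0 by (rule mult_left_mono)
      then show "M * \<tau> / exp (2 * L * \<tau>) \<le> M / (2 * L)"
        using E t0 L M0 Epos by (simp add: divide_simps mult_ac)
    qed
    finally show ?thesis .
  qed
  have Pbc: "P g \<in> bcontfun" if "continuous_on UNIV g" for g
    by (rule bcontfun_normI[OF Pcont[OF that] Pbnd[OF that]])
  define T where "T g = Bcontfun (P (apply_bcontfun g))" for g :: "real \<Rightarrow>\<^sub>C 'a"
  have TP: "apply_bcontfun (T g) = P (apply_bcontfun g)" for g
    unfolding T_def by (rule Bcontfun_inverse[OF Pbc]) simp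
  have contr: "dist (T g1) (T g2) \<le> 1/2 * dist g1 g2" for g1 g2
  proof (rule dist_bound)
    fix t :: real
    define D where "D = dist g1 g2"
    define \<tau> where "\<tau> = max t 0"
    have t0: "\<tau> \<ge> 0" unfolding \<tau>_def by simp
    define h1 where "h1 s = F (exp (2 * L * s) *\<^sub>R apply_bcontfun g1 s)" for s
    define h2 where "h2 s = F (exp (2 * L * s) *\<^sub>R apply_bcontfun g2 s)" for s
    have c1: "continuous_on {0..\<tau>} h1" unfolding h1_def
      by (rule continuous_on_subset[OF hcont]) auto
    have c2: "continuous_on {0..\<tau>} h2" unfolding h2_def
      by (rule continuous_on_subset[OF hcont]) auto
    have "Ig g1 \<tau> - Ig g2 \<tau> = integral {0..\<tau>} (\<lambda>s. h1 s - h2 s)"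
      unfolding Ig_def h1_def[symmetric] h2_def[symmetric]
      by (rule integral_diff[symmetric]) (auto intro!: integrable_continuous_real c1 c2)
    have "norm (integral {0..\<tau>} (\<lambda>s. h1 s - h2 s)) \<le> integral {0..\<tau>} (\<lambda>s. L * D * exp (2 * L * s))"
    proof (rule integral_norm_bound_integral)
      show "(\<lambda>s. h1 s - h2 s) integrable_on {0..\<tau>}"
        by (intro integrable_continuous_real continuous_intros c1 c2)
      show "(\<lambda>s. L * D * exp (2 * L * s)) integrable_on {0..\<tau>}"
        by (intro integrable_continuous_real continuous_intros)
      fix s assume "s \<in> {0..\<tau>}"
      have "norm (h1 s - h2 s) \<le> L * norm (exp (2 * L * s) *\<^sub>R apply_bcontfun g1 s - exp (2 * L * s) *\<^sub>R apply_bcontfun g2 s)"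
        unfolding h1_def h2_def by (rule lip)
      also have "\<dots> = L * exp (2 * L * s) * dist (apply_bcontfun g1 s) (apply_bcontfun g2 s)"
        by (simp add: dist_norm scaleR_diff_right[symmetric])
      also have "\<dots> \<le> L * exp (2 * L * s) * D"
        unfolding D_def using L by (intro mult_left_mono dist_bounded) auto
      finally show "norm (h1 s - h2 s) \<le> L * D * exp (2 * L * s)" by (simp add: mult_ac)
    qed
    also have "integral {0..\<tau>} (\<lambda>s. L * D * exp (2 * L * s)) = D/2 * exp (2 * L * \<tau>) - D/2"
    proof -
      have "((\<lambda>s. L * D * exp (2 * L * s)) has_integral (D/2 * exp (2 * L * \<tau>) - D/2 * exp (2 * L * 0))) {0..\<tau>}"
      proof (rule fundamental_theorem_of_calculus[OF t0])
        fix x assume "x \<in> {0..\<tau>}"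
        have "((\<lambda>s. D/2 * exp (2 * L * s)) has_real_derivative (D/2 * (exp (2 * L * x) * (2 * L)))) (at x within {0..\<tau>})"
          by (auto intro!: derivative_eq_intros)
        then show "((\<lambda>s. D/2 * exp (2 * L * s)) has_vector_derivative (L * D * exp (2 * L * x))) (at x within {0..\<tau>})"
          using L by (simp add: has_real_derivative_iff_has_vector_derivative[symmetric] mult_ac)
      qed
      then show ?thesis by (metis (no_types, lifting) integral_unique exp_zero mult_zero_right mult_1_right)
    qed
    finally have nb: "norm (Ig g1 \<tau> - Ig g2 \<tau>) \<le> D/2 * exp (2 * L * \<tau>) - D/2"
      using \<open>Ig g1 \<tau> - Ig g2 \<tau> = _\<close> by simp
    have D0: "D \<ge> 0" unfolding D_def by simp
    have "dist (T g1 t) (T g2 t) = exp (-(2 * L * \<tau>)) * norm (Ig g1 \<tau> - Ig g2 \<tau>)"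
      unfolding TP P_def \<tau>_def dist_norm by (simp add: scaleR_diff_right[symmetric])
    also have "\<dots> \<le> exp (-(2 * L * \<tau>)) * (D/2 * exp (2 * L * \<tau>) - D/2)"
      by (rule mult_left_mono[OF nb]) simp
    also have "\<dots> = D/2 - D/2 * exp (-(2 * L * \<tau>))"
      by (simp add: exp_minus field_simps)
    also have "\<dots> \<le> 1/2 * dist g1 g2" using D0 unfolding D_def by simp
    finally show "dist (T g1 t) (T g2 t) \<le> 1/2 * dist g1 g2" .
  qed
  obtain g where gfix: "T g = g"
    using banach_fix_type[of "1/2" T] contr by auto
  define \<phi> where "\<phi> t = exp (2 * L * t) *\<^sub>R apply_bcontfun g t" for t
  have phieq: "\<phi> t = p0 + Ig (apply_bcontfun g) t" if "t \<ge> 0" for t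
  proof -
    have "apply_bcontfun g t = P (apply_bcontfun g) t" using TP[of g] gfix by simp
    then show ?thesis unfolding \<phi>_def P_def using that by (simp add: exp_minus)
  qed
  have "\<phi> 0 = p0" using phieq[of 0] unfolding Ig_def by simp
  moreover have "(\<phi> has_vector_derivative F (\<phi> t)) (at t within {0..})" if t: "t \<ge> 0" for t
  proof (rule has_vector_derivative_transform)
    show "t \<in> {0..}" using t by simp
    show "\<phi> s = p0 + Ig (apply_bcontfun g) s" if "s \<in> {0..}" for s using phieq that by simp
    have "((\<lambda>s. Ig (apply_bcontfun g) s) has_vector_derivative F (exp (2 * L * t) *\<^sub>R apply_bcontfun g t)) (at t within {0..})"
      unfolding Ig_def by (rule integral_deriv_Ici[OF hcont t]) simp
    then show "((\<lambda>s. p0 + Ig (apply_bcontfun g) s) has_vector_derivative F (\<phi> t)) (at t within {0..})"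
      unfolding \<phi>_def by (auto intro!: derivative_eq_intros)
  qed
  ultimately show ?thesis by blast
qed



definition cl :: "real \<Rightarrow> real" where "cl t = max 0 (min 1 t)"

lemma cl_lip: "\<bar>cl s - cl t\<bar> \<le> \<bar>s - t\<bar>"
  unfolding cl_def by (auto simp: max_def min_def)

lemma cl_range: "0 \<le> cl s" "cl s \<le> 1"
  unfolding cl_def by auto

lemma cl_id: "0 \<le> s \<Longrightarrow> s \<le> 1 \<Longrightarrow> cl s = s"
  unfolding cl_def by auto

lemma abs_prod_diff:
  fixes a1 a2 b1 b2 A B :: real
  assumes "\<bar>b1\<bar> \<le> B" "\<bar>a2\<bar> \<le> A"
  shows "\<bar>a1 * b1 - a2 * b2\<bar> \<le> \<bar>a1 - a2\<bar> * B + A * \<bar>b1 - b2\<bar>"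
proof -
  have "a1 * b1 - a2 * b2 = (a1 - a2) * b1 + a2 * (b1 - b2)" by algebra
  then have "\<bar>a1 * b1 - a2 * b2\<bar> \<le> \<bar>a1 - a2\<bar> * \<bar>b1\<bar> + \<bar>a2\<bar> * \<bar>b1 - b2\<bar>"
    by (metis abs_mult abs_triangle_ineq)
  also have "\<dots> \<le> \<bar>a1 - a2\<bar> * B + A * \<bar>b1 - b2\<bar>"
    using assms by (intro add_mono mult_left_mono mult_right_mono) auto
  finally show ?thesis .
qed

lemma unit_bounds:
  fixes X1 X2 :: real
  assumes "0 \<le> X1" "X1 \<le> 1" "0 \<le> X2" "X2 \<le> 1"
  shows "\<bar>X1 * (1 - X1) - X2 * (1 - X2)\<bar> \<le> \<bar>X1 - X2\<bar>" "\<bar>X1 * (1 - X1)\<bar> \<le> 1"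
    "\<bar>X1 * X2\<bar> \<le> 1"
proof -
  have "X1 * (1 - X1) - X2 * (1 - X2) = (X1 - X2) * (1 - X1 - X2)" by algebra
  moreover have "\<bar>1 - X1 - X2\<bar> \<le> 1" using assms by auto
  ultimately show "\<bar>X1 * (1 - X1) - X2 * (1 - X2)\<bar> \<le> \<bar>X1 - X2\<bar>"
    by (metis abs_mult mult_left_mono abs_ge_zero mult.right_neutral)
  show "\<bar>X1 * (1 - X1)\<bar> \<le> 1" using assms mult_le_one[of X1 "1 - X1"] by auto
  show "\<bar>X1 * X2\<bar> \<le> 1" using assms mult_le_one[of X1 X2] by auto
qed

lemma B_bounds:
  fixes X1 X2 R1 R2 k1 k2 k3 k4 :: real
  assumes "0 \<le> X1" "X1 \<le> 1" "0 \<le> X2" "X2 \<le> 1" "0 \<le> R1" "R1 \<le> 1" "0 \<le> R2" "R2 \<le> 1"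
  defines "KB \<equiv> \<bar>k1\<bar> + \<bar>k2\<bar> + \<bar>k3\<bar> + \<bar>k4\<bar>"
  shows "\<bar>X1 * R1 * k1 + X1 * k2 - R1 * k3 + k4\<bar> \<le> KB"
    and "\<bar>(X1 * R1 * k1 + X1 * k2 - R1 * k3 + k4) - (X2 * R2 * k1 + X2 * k2 - R2 * k3 + k4)\<bar>
          \<le> KB * (\<bar>X1 - X2\<bar> + \<bar>R1 - R2\<bar>)"
proof -
  have xr: "\<bar>X1 * R1\<bar> \<le> 1" using unit_bounds(3)[of X1 R1] assms by auto
  have "\<bar>X1 * R1 * k1\<bar> \<le> \<bar>k1\<bar>" using xr by (simp add: abs_mult mult_left_le_one_le)
  moreover have "\<bar>X1 * k2\<bar> \<le> \<bar>k2\<bar>" using assms by (simp add: abs_mult mult_left_le_one_le)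
  moreover have "\<bar>R1 * k3\<bar> \<le> \<bar>k3\<bar>" using assms by (simp add: abs_mult mult_left_le_one_le)
  ultimately show "\<bar>X1 * R1 * k1 + X1 * k2 - R1 * k3 + k4\<bar> \<le> KB"
    unfolding KB_def by linarith
  have d: "\<bar>X1 * R1 - X2 * R2\<bar> \<le> \<bar>X1 - X2\<bar> * 1 + 1 * \<bar>R1 - R2\<bar>"
    by (rule abs_prod_diff) (use assms in auto)
  have "(X1 * R1 * k1 + X1 * k2 - R1 * k3 + k4) - (X2 * R2 * k1 + X2 * k2 - R2 * k3 + k4)
      = k1 * (X1 * R1 - X2 * R2) + k2 * (X1 - X2) - k3 * (R1 - R2)" by algebra
  then have "\<bar>(X1 * R1 * k1 + X1 * k2 - R1 * k3 + k4) - (X2 * R2 * k1 + X2 * k2 - R2 * k3 + k4)\<bar>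
      \<le> \<bar>k1\<bar> * \<bar>X1 * R1 - X2 * R2\<bar> + \<bar>k2\<bar> * \<bar>X1 - X2\<bar> + \<bar>k3\<bar> * \<bar>R1 - R2\<bar>"
    by (simp add: abs_mult[symmetric])
  also have "\<dots> \<le> \<bar>k1\<bar> * (\<bar>X1 - X2\<bar> + \<bar>R1 - R2\<bar>) + \<bar>k2\<bar> * (\<bar>X1 - X2\<bar> + \<bar>R1 - R2\<bar>)
      + \<bar>k3\<bar> * (\<bar>X1 - X2\<bar> + \<bar>R1 - R2\<bar>)"
    using d by (intro add_mono mult_left_mono) auto
  also have "\<dots> \<le> KB * (\<bar>X1 - X2\<bar> + \<bar>R1 - R2\<bar>)"
    unfolding KB_def by (simp add: algebra_simps)
  finally show "\<bar>(X1 * R1 * k1 + X1 * k2 - R1 * k3 + k4) - (X2 * R2 * k1 + X2 * k2 - R2 * k3 + k4)\<bar>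
          \<le> KB * (\<bar>X1 - X2\<bar> + \<bar>R1 - R2\<bar>)" .
qed

lemma f1_lip:
  fixes X1 X2 R1 R2 k1 k2 k3 k4 \<mu> :: real
  assumes "0 \<le> X1" "X1 \<le> 1" "0 \<le> X2" "X2 \<le> 1" "0 \<le> R1" "R1 \<le> 1" "0 \<le> R2" "R2 \<le> 1" "\<mu> \<ge> 0"
  defines "KB \<equiv> \<bar>k1\<bar> + \<bar>k2\<bar> + \<bar>k3\<bar> + \<bar>k4\<bar>"
  shows "\<bar>(X1 * (1 - X1) * (X1 * R1 * k1 + X1 * k2 - R1 * k3 + k4) + \<mu> * (1 - 2 * X1))
          - (X2 * (1 - X2) * (X2 * R2 * k1 + X2 * k2 - R2 * k3 + k4) + \<mu> * (1 - 2 * X2))\<bar>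
         \<le> (2 * KB + 2 * \<mu>) * (\<bar>X1 - X2\<bar> + \<bar>R1 - R2\<bar>)"
proof -
  define B1 where "B1 = X1 * R1 * k1 + X1 * k2 - R1 * k3 + k4"
  define B2 where "B2 = X2 * R2 * k1 + X2 * k2 - R2 * k3 + k4"
  define S where "S = \<bar>X1 - X2\<bar> + \<bar>R1 - R2\<bar>"
  have S0: "\<bar>X1 - X2\<bar> \<le> S" unfolding S_def by simp
  have hB1: "\<bar>B1\<bar> \<le> KB" unfolding B1_def KB_def by (rule B_bounds(1)) (use assms in auto)
  have hB: "\<bar>B1 - B2\<bar> \<le> KB * S" unfolding B1_def B2_def KB_def S_def by (rule B_bounds(2)) (use assms in auto)
  have hP: "\<bar>X1 * (1 - X1) - X2 * (1 - X2)\<bar> \<le> \<bar>X1 - X2\<bar>" "\<bar>X2 * (1 - X2)\<bar> \<le> 1"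
    using unit_bounds[of X1 X2] unit_bounds[of X2 X1] assms by auto
  have KB0: "KB \<ge> 0" unfolding KB_def by simp
  have "\<bar>X1 * (1 - X1) * B1 - X2 * (1 - X2) * B2\<bar> \<le> \<bar>X1 * (1 - X1) - X2 * (1 - X2)\<bar> * KB + 1 * \<bar>B1 - B2\<bar>"
    by (rule abs_prod_diff[OF hB1 hP(2)])
  also have "\<dots> \<le> S * KB + 1 * (KB * S)"
    using hP(1) S0 hB KB0 by (intro add_mono mult_right_mono mult_left_mono) auto
  finally have p1: "\<bar>X1 * (1 - X1) * B1 - X2 * (1 - X2) * B2\<bar> \<le> 2 * KB * S" by simp
  have p2: "\<bar>\<mu> * (1 - 2 * X1) - \<mu> * (1 - 2 * X2)\<bar> \<le> 2 * \<mu> * S"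
  proof -
    have "\<mu> * (1 - 2 * X1) - \<mu> * (1 - 2 * X2) = (2 * \<mu>) * (X2 - X1)" by algebra
    then have "\<bar>\<mu> * (1 - 2 * X1) - \<mu> * (1 - 2 * X2)\<bar> = 2 * \<mu> * \<bar>X1 - X2\<bar>"
      using assms(9) by (simp add: abs_mult abs_minus_commute)
    also have "\<dots> \<le> 2 * \<mu> * S" using S0 assms(9) by (intro mult_left_mono) auto
    finally show ?thesis .
  qed
  have "\<bar>(X1 * (1 - X1) * B1 + \<mu> * (1 - 2 * X1)) - (X2 * (1 - X2) * B2 + \<mu> * (1 - 2 * X2))\<bar>
      \<le> \<bar>X1 * (1 - X1) * B1 - X2 * (1 - X2) * B2\<bar> + \<bar>\<mu> * (1 - 2 * X1) - \<mu> * (1 - 2 * X2)\<bar>"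
    by linarith
  also have "\<dots> \<le> (2 * KB + 2 * \<mu>) * S" using p1 p2 by (simp add: algebra_simps)
  finally show ?thesis unfolding B1_def B2_def S_def .
qed

lemma lin_aux: "(A::real) \<le> B \<Longrightarrow> 0 \<le> B \<Longrightarrow> A + 2 * C \<le> 2 * (C + B)" unfolding distrib_left by linarith

lemma f2_lip:
  fixes X1 X2 R1 R2 :: real
  assumes "0 \<le> X1" "X1 \<le> 1" "0 \<le> X2" "X2 \<le> 1" "0 \<le> R1" "R1 \<le> 1" "0 \<le> R2" "R2 \<le> 1"
  shows "\<bar>R1 * (1 - R1) * (2 * X1 - 1) - R2 * (1 - R2) * (2 * X2 - 1)\<bar> \<le> 2 * (\<bar>X1 - X2\<bar> + \<bar>R1 - R2\<bar>)"
proof -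
  have h1: "\<bar>2 * X1 - 1\<bar> \<le> 1" using assms by auto
  have hP: "\<bar>R1 * (1 - R1) - R2 * (1 - R2)\<bar> \<le> \<bar>R1 - R2\<bar>" "\<bar>R2 * (1 - R2)\<bar> \<le> 1"
    using unit_bounds[of R1 R2] unit_bounds[of R2 R1] assms by auto
  have "\<bar>R1 * (1 - R1) * (2 * X1 - 1) - R2 * (1 - R2) * (2 * X2 - 1)\<bar>
     \<le> \<bar>R1 * (1 - R1) - R2 * (1 - R2)\<bar> * 1 + 1 * \<bar>(2 * X1 - 1) - (2 * X2 - 1)\<bar>"
    by (rule abs_prod_diff[OF h1 hP(2)])
  also have "\<bar>(2 * X1 - 1) - (2 * X2 - 1)\<bar> = 2 * \<bar>X1 - X2\<bar>" by (auto simp: abs_if)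
  also have "\<bar>R1 * (1 - R1) - R2 * (1 - R2)\<bar> * 1 + 1 * (2 * \<bar>X1 - X2\<bar>) \<le> 2 * (\<bar>X1 - X2\<bar> + \<bar>R1 - R2\<bar>)" by (simp only: mult_1_right mult_1_left) (rule lin_aux[OF hP(1) abs_ge_zero])
  finally show ?thesis .
qed

definition Fc :: "real \<Rightarrow> real \<Rightarrow> real \<Rightarrow> real \<Rightarrow> real \<Rightarrow> real \<Rightarrow> real \<times> real \<Rightarrow> real \<times> real" where
  "Fc a b c d \<mu> u z = ctrl_field a b c d \<mu> u (cl (fst z), cl (snd z))"

lemma field_eq: "ctrl_field a b c d \<mu> u (x, r) =
  (x * (1 - x) * (x * r * (- c + d - a + b) + x * (a - b) - r * (d + b) + (b + u)) + \<mu> * (1 - 2 * x),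
   r * (1 - r) * (2 * x - 1))"
  unfolding ctrl_field_def by (simp add: add.assoc)

lemma Fc_lip:
  fixes a b c d \<mu> u :: real and z1 z2 :: "real \<times> real"
  assumes "\<mu> \<ge> 0"
  defines "KB \<equiv> \<bar>- c + d - a + b\<bar> + \<bar>a - b\<bar> + \<bar>d + b\<bar> + \<bar>b + u\<bar>"
  shows "norm (Fc a b c d \<mu> u z1 - Fc a b c d \<mu> u z2) \<le> (2 * (2 * KB + 2 * \<mu> + 2)) * norm (z1 - z2)"
proof -
  obtain x1 r1 where z1: "z1 = (x1, r1)" by fastforce
  obtain x2 r2 where z2: "z2 = (x2, r2)" by fastforce
  define S where "S = \<bar>cl x1 - cl x2\<bar> + \<bar>cl r1 - cl r2\<bar>"
  have S: "S \<le> 2 * norm (z1 - z2)"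
  proof -
    have "\<bar>x1 - x2\<bar> \<le> norm (z1 - z2)" "\<bar>r1 - r2\<bar> \<le> norm (z1 - z2)"
      using norm_fst_le[of "x1 - x2" "r1 - r2"] norm_snd_le[of "r1 - r2" "x1 - x2"] z1 z2 by auto
    then show ?thesis unfolding S_def using cl_lip[of x1 x2] cl_lip[of r1 r2] by linarith
  qed
  have e1: "\<bar>fst (Fc a b c d \<mu> u z1 - Fc a b c d \<mu> u z2)\<bar> \<le> (2 * KB + 2 * \<mu>) * S"
    apply (simp only: Fc_def z1 z2 field_eq fst_conv snd_conv fst_diff S_def KB_def)
    by (rule f1_lip) (use assms cl_range in auto)
  have e2: "\<bar>snd (Fc a b c d \<mu> u z1 - Fc a b c d \<mu> u z2)\<bar> \<le> 2 * S"
    apply (simp only: Fc_def z1 z2 field_eq fst_conv snd_conv snd_diff S_def)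
    by (rule f2_lip) (use cl_range in auto)
  have "norm (Fc a b c d \<mu> u z1 - Fc a b c d \<mu> u z2)
      \<le> \<bar>fst (Fc a b c d \<mu> u z1 - Fc a b c d \<mu> u z2)\<bar> + \<bar>snd (Fc a b c d \<mu> u z1 - Fc a b c d \<mu> u z2)\<bar>"
    by (metis norm_Pair_le prod.collapse real_norm_def)
  also have "\<dots> \<le> (2 * KB + 2 * \<mu> + 2) * S" using e1 e2 by (simp add: algebra_simps)
  also have "\<dots> \<le> (2 * KB + 2 * \<mu> + 2) * (2 * norm (z1 - z2))"
    using S assms by (intro mult_left_mono) (auto simp: KB_def)
  finally show ?thesis by (simp add: algebra_simps)
qed

lemma Fc_bnd:
  fixes a b c d \<mu> u :: real and z :: "real \<times> real"
  assumes "\<mu> \<ge> 0"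
  shows "norm (Fc a b c d \<mu> u z) \<le> (\<bar>- c + d - a + b\<bar> + \<bar>a - b\<bar> + \<bar>d + b\<bar> + \<bar>b + u\<bar>) + \<mu> + 1"
proof -
  define X where "X = cl (fst z)"
  define R where "R = cl (snd z)"
  have X: "0 \<le> X" "X \<le> 1" and R: "0 \<le> R" "R \<le> 1" unfolding X_def R_def using cl_range by auto
  have hB: "\<bar>X * R * (- c + d - a + b) + X * (a - b) - R * (d + b) + (b + u)\<bar>
     \<le> \<bar>- c + d - a + b\<bar> + \<bar>a - b\<bar> + \<bar>d + b\<bar> + \<bar>b + u\<bar>"
    by (rule B_bounds(1)[of X X R R]) (use X R in auto)
  have hP: "\<bar>X * (1 - X)\<bar> \<le> 1" "\<bar>R * (1 - R)\<bar> \<le> 1" using unit_bounds[of X X] unit_bounds[of R R] X R by auto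
  have "\<bar>X * (1 - X) * (X * R * (- c + d - a + b) + X * (a - b) - R * (d + b) + (b + u))\<bar>
     \<le> 1 * (\<bar>- c + d - a + b\<bar> + \<bar>a - b\<bar> + \<bar>d + b\<bar> + \<bar>b + u\<bar>)"
    unfolding abs_mult[of "X * (1 - X)"] by (rule mult_mono[OF hP(1) hB]) auto
  moreover have "\<bar>\<mu> * (1 - 2 * X)\<bar> \<le> \<mu>"
  proof -
    have "\<bar>1 - 2 * X\<bar> \<le> 1" using X by auto
    then have "\<mu> * \<bar>1 - 2 * X\<bar> \<le> \<mu> * 1" using assms by (intro mult_left_mono) auto
    then show ?thesis using assms by (simp add: abs_mult)
  qed
  moreover have "\<bar>R * (1 - R) * (2 * X - 1)\<bar> \<le> 1" using hP(2) X
    by (auto simp: abs_mult intro: mult_le_one)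
  ultimately show ?thesis
    unfolding Fc_def field_eq X_def[symmetric] R_def[symmetric]
    using norm_Pair_le[of "X * (1 - X) * (X * R * (- c + d - a + b) + X * (a - b) - R * (d + b) + (b + u)) + \<mu> * (1 - 2 * X)" "R * (1 - R) * (2 * X - 1)"]
      abs_triangle_ineq[of "X * (1 - X) * (X * R * (- c + d - a + b) + X * (a - b) - R * (d + b) + (b + u))" "\<mu> * (1 - 2 * X)"]
    by (simp only: real_norm_def mult_1_left; linarith)
qed



lemma vd_fst:
  assumes "(\<phi> has_vector_derivative v) F"
  shows "((\<lambda>t. fst (\<phi> t)) has_real_derivative fst v) F"
proof -
  have "((\<lambda>t. fst (\<phi> t)) has_derivative (\<lambda>h. fst (h *\<^sub>R v))) F"
    using assms unfolding has_vector_derivative_def by (rule has_derivative_fst)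
  moreover have "(\<lambda>h. fst (h *\<^sub>R v)) = (*) (fst v)" by (auto simp: fun_eq_iff)
  ultimately show ?thesis unfolding has_field_derivative_def by simp
qed

lemma vd_snd:
  assumes "(\<phi> has_vector_derivative v) F"
  shows "((\<lambda>t. snd (\<phi> t)) has_real_derivative snd v) F"
proof -
  have "((\<lambda>t. snd (\<phi> t)) has_derivative (\<lambda>h. snd (h *\<^sub>R v))) F"
    using assms unfolding has_vector_derivative_def by (rule has_derivative_snd)
  moreover have "(\<lambda>h. snd (h *\<^sub>R v)) = (*) (snd v)" by (auto simp: fun_eq_iff)
  ultimately show ?thesis unfolding has_field_derivative_def by simp
qed

lemma deriv_at_pos:
  fixes h :: "real \<Rightarrow> real"
  assumes "(h has_real_derivative D) (at t within {0..})" "t > 0"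
  shows "(h has_real_derivative D) (at t)"
proof -
  have "at t within {0..} = at t" by (rule at_within_open_subset[of t "{0<..}"]) (use assms in auto)
  then show ?thesis using assms by simp
qed

lemma cont_Ici:
  fixes h h' :: "real \<Rightarrow> real"
  assumes d: "\<And>t. t \<ge> 0 \<Longrightarrow> (h has_real_derivative h' t) (at t within {0..})"
  shows "continuous_on {0..} h"
  unfolding continuous_on_eq_continuous_within
  by (meson DERIV_continuous atLeast_iff d)

lemma mono_Ici:
  fixes h h' :: "real \<Rightarrow> real"
  assumes d: "\<And>t. t \<ge> 0 \<Longrightarrow> (h has_real_derivative h' t) (at t within {0..})"
    and ab: "0 \<le> a" "a \<le> b" and nn: "\<And>t. a < t \<Longrightarrow> t < b \<Longrightarrow> h' t \<ge> 0"
  shows "h a \<le> h b"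
proof (rule DERIV_nonneg_imp_increasing_open[OF ab(2)])
  fix x assume x: "a < x" "x < b"
  then have "DERIV h x :> h' x" using deriv_at_pos[OF d] ab by auto
  then show "\<exists>y. DERIV h x :> y \<and> y \<ge> 0" using nn x by blast
next
  show "continuous_on {a..b} h"
    by (rule continuous_on_subset[OF cont_Ici[OF d]]) (use ab in auto)
qed

lemma stay_below:
  fixes h h' :: "real \<Rightarrow> real"
  assumes d: "\<And>t. t \<ge> 0 \<Longrightarrow> (h has_real_derivative h' t) (at t within {0..})"
    and h0: "h 0 \<le> c" and np: "\<And>t. t \<ge> 0 \<Longrightarrow> h t > c \<Longrightarrow> h' t \<le> 0"
    and t: "t \<ge> 0"
  shows "h t \<le> c"
proof (rule ccontr)
  assume "\<not> h t \<le> c"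
  then have ht: "h t > c" by simp
  define A where "A = {0..t} \<inter> h -` {..c}"
  have cont: "continuous_on {0..} h" by (rule cont_Ici[OF d])
  have "closed A" unfolding A_def
    by (rule continuous_closed_preimage) (auto intro: continuous_on_subset[OF cont])
  moreover have "0 \<in> A" using h0 t unfolding A_def by auto
  moreover have bdd: "bdd_above A" unfolding A_def by (auto intro: bdd_aboveI[of _ t])
  ultimately have SA: "Sup A \<in> A" by (intro closed_contains_Sup) auto
  define t0 where "t0 = Sup A"
  have t0: "0 \<le> t0" "t0 \<le> t" "h t0 \<le> c" using SA unfolding t0_def A_def by auto
  have gt: "h s > c" if "t0 < s" "s \<le> t" for s
  proof (rule ccontr)
    assume "\<not> h s > c"
    then have "s \<in> A" using that t0 unfolding A_def by auto
    then have "s \<le> t0" unfolding t0_def using bdd by (rule cSup_upper)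
    then show False using that by simp
  qed
  have "(\<lambda>s. - h s) t0 \<le> (\<lambda>s. - h s) t"
  proof (rule mono_Ici[where h = "\<lambda>s. - h s" and h' = "\<lambda>s. - h' s"])
    show "((\<lambda>s. - h s) has_real_derivative - h' s) (at s within {0..})" if "s \<ge> 0" for s
      using d[OF that] by (rule DERIV_minus)
    show "- h' s \<ge> 0" if "t0 < s" "s < t" for s using np[of s] gt[of s] that t0 by auto
  qed (use t0 in auto)
  then show False using t0 ht by simp
qed

lemma first_exit:
  fixes h :: "real \<Rightarrow> real"
  assumes cont: "continuous_on {0..} h" and h0: "h 0 < c" and t1: "0 \<le> t1" "c \<le> h t1"
  shows "\<exists>t0. 0 < t0 \<and> t0 \<le> t1 \<and> c \<le> h t0 \<and> (\<forall>s. 0 \<le> s \<and> s < t0 \<longrightarrow> h s < c)"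
proof -
  define A where "A = {0..t1} \<inter> h -` {c..}"
  have "closed A" unfolding A_def
    by (rule continuous_closed_preimage) (auto intro: continuous_on_subset[OF cont])
  moreover have "t1 \<in> A" using t1 unfolding A_def by auto
  moreover have bdd: "bdd_below A" unfolding A_def by (auto intro: bdd_belowI[of _ 0])
  ultimately have IA: "Inf A \<in> A" by (intro closed_contains_Inf) auto
  define t0 where "t0 = Inf A"
  have t0: "0 \<le> t0" "t0 \<le> t1" "c \<le> h t0" using IA unfolding t0_def A_def by auto
  have "t0 \<noteq> 0" using t0 h0 by auto
  moreover have "h s < c" if "0 \<le> s" "s < t0" for s
  proof (rule ccontr)
    assume "\<not> h s < c"
    then have "s \<in> A" using that t0 unfolding A_def by auto
    then have "t0 \<le> s" unfolding t0_def using bdd by (rule cInf_lower)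
    then show False using that by simp
  qed
  ultimately show ?thesis using t0 by (intro exI[of _ t0]) auto
qed



lemma Fc_in_square:
  assumes "z \<in> unit_square"
  shows "Fc a b c d \<mu> u z = ctrl_field a b c d \<mu> u z"
  using assms unfolding Fc_def unit_square_def by (cases z) (auto simp: cl_id)

lemma solution_exists:
  fixes a b c d \<mu> u :: real and p0 :: "real \<times> real"
  assumes mu: "\<mu> > 0" and p0: "p0 \<in> unit_square"
  shows "\<exists>\<phi>. \<phi> 0 = p0 \<and> is_solution (ctrl_field a b c d \<mu> u) unit_square \<phi>"
proof -
  define KB where "KB = \<bar>- c + d - a + b\<bar> + \<bar>a - b\<bar> + \<bar>d + b\<bar> + \<bar>b + u\<bar>"
  have KB0: "KB \<ge> 0" unfolding KB_def by simp
  obtain \<phi> where \<phi>0: "\<phi> 0 = p0"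
    and d\<phi>: "\<And>t. t \<ge> 0 \<Longrightarrow> (\<phi> has_vector_derivative Fc a b c d \<mu> u (\<phi> t)) (at t within {0..})"
  proof -
    have "\<exists>\<phi>. \<phi> 0 = p0 \<and> (\<forall>t\<ge>0. (\<phi> has_vector_derivative Fc a b c d \<mu> u (\<phi> t)) (at t within {0..}))"
    proof (rule global_existence)
      show "0 < 2 * (2 * KB + 2 * \<mu> + 2)" using KB0 mu by simp
      show "norm (Fc a b c d \<mu> u z - Fc a b c d \<mu> u w) \<le> 2 * (2 * KB + 2 * \<mu> + 2) * norm (z - w)" for z w
        unfolding KB_def using Fc_lip[of \<mu> a b c d u z w] mu by simp
      show "norm (Fc a b c d \<mu> u z) \<le> KB + \<mu> + 1" for z
        unfolding KB_def using Fc_bnd[of \<mu> a b c d u z] mu by simp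
    qed
    then show ?thesis using that by blast
  qed
  define F1 where "F1 t = fst (Fc a b c d \<mu> u (\<phi> t))" for t
  define F2 where "F2 t = snd (Fc a b c d \<mu> u (\<phi> t))" for t
  have dX: "((\<lambda>t. fst (\<phi> t)) has_real_derivative F1 t) (at t within {0..})" if "t \<ge> 0" for t
    unfolding F1_def by (rule vd_fst[OF d\<phi>[OF that]])
  have dR: "((\<lambda>t. snd (\<phi> t)) has_real_derivative F2 t) (at t within {0..})" if "t \<ge> 0" for t
    unfolding F2_def by (rule vd_snd[OF d\<phi>[OF that]])
  have F1eq: "F1 t = cl (fst (\<phi> t)) * (1 - cl (fst (\<phi> t))) * (cl (fst (\<phi> t)) * cl (snd (\<phi> t)) * (- c + d - a + b)
      + cl (fst (\<phi> t)) * (a - b) - cl (snd (\<phi> t)) * (d + b) + (b + u)) + \<mu> * (1 - 2 * cl (fst (\<phi> t)))" for t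
    unfolding F1_def Fc_def field_eq by simp
  have F2eq: "F2 t = cl (snd (\<phi> t)) * (1 - cl (snd (\<phi> t))) * (2 * cl (fst (\<phi> t)) - 1)" for t
    unfolding F2_def Fc_def field_eq by simp
  have p0': "0 \<le> fst p0" "fst p0 \<le> 1" "0 \<le> snd p0" "snd p0 \<le> 1"
    using p0 unfolding unit_square_def by auto
  have X1: "fst (\<phi> t) \<le> 1" if "t \<ge> 0" for t
  proof (rule stay_below[OF dX _ _ that])
    show "fst (\<phi> 0) \<le> 1" using p0' \<phi>0 by simp
    show "F1 s \<le> 0" if "s \<ge> 0" "fst (\<phi> s) > 1" for s
    proof -
      have "cl (fst (\<phi> s)) = 1" using that unfolding cl_def by auto
      then show ?thesis unfolding F1eq using mu by simp
    qed
  qed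
  have X0: "- fst (\<phi> t) \<le> 0" if "t \<ge> 0" for t
  proof (rule stay_below[where h = "\<lambda>t. - fst (\<phi> t)" and h' = "\<lambda>t. - F1 t", OF _ _ _ that])
    show "((\<lambda>t. - fst (\<phi> t)) has_real_derivative - F1 s) (at s within {0..})" if "s \<ge> 0" for s
      using dX[OF that] by (rule DERIV_minus)
    show "- fst (\<phi> 0) \<le> 0" using p0' \<phi>0 by simp
    show "- F1 s \<le> 0" if "s \<ge> 0" "- fst (\<phi> s) > 0" for s
    proof -
      have "cl (fst (\<phi> s)) = 0" using that unfolding cl_def by auto
      then show ?thesis unfolding F1eq using mu by simp
    qed
  qed
  have R1: "snd (\<phi> t) \<le> 1" if "t \<ge> 0" for t
  proof (rule stay_below[OF dR _ _ that])
    show "snd (\<phi> 0) \<le> 1" using p0' \<phi>0 by simp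
    show "F2 s \<le> 0" if "s \<ge> 0" "snd (\<phi> s) > 1" for s
    proof -
      have "cl (snd (\<phi> s)) = 1" using that unfolding cl_def by auto
      then show ?thesis unfolding F2eq by simp
    qed
  qed
  have R0: "- snd (\<phi> t) \<le> 0" if "t \<ge> 0" for t
  proof (rule stay_below[where h = "\<lambda>t. - snd (\<phi> t)" and h' = "\<lambda>t. - F2 t", OF _ _ _ that])
    show "((\<lambda>t. - snd (\<phi> t)) has_real_derivative - F2 s) (at s within {0..})" if "s \<ge> 0" for s
      using dR[OF that] by (rule DERIV_minus)
    show "- snd (\<phi> 0) \<le> 0" using p0' \<phi>0 by simp
    show "- F2 s \<le> 0" if "s \<ge> 0" "- snd (\<phi> s) > 0" for s
    proof -
      have "cl (snd (\<phi> s)) = 0" using that unfolding cl_def by auto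
      then show ?thesis unfolding F2eq by simp
    qed
  qed
  have sq: "\<phi> t \<in> unit_square" if "t \<ge> 0" for t
    using X1[OF that] X0[OF that] R1[OF that] R0[OF that] unfolding unit_square_def
    by (cases "\<phi> t") auto
  have "is_solution (ctrl_field a b c d \<mu> u) unit_square \<phi>"
    unfolding is_solution_def using d\<phi> sq Fc_in_square by metis
  then show ?thesis using \<phi>0 by blast
qed



lemma cubic_Q:
  fixes k h0 \<mu> ys y :: real
  shows "h0/4 - (k/4 + 2*\<mu>)*y - h0*y^2 + k*y^3
     = (y - ys) * (k*y^2 + (k*ys - h0)*y + (k*ys^2 - h0*ys - k/4 - 2*\<mu>))
       + (h0/4 - (k/4 + 2*\<mu>)*ys - h0*ys^2 + k*ys^3)"
  by (simp add: field_simps power2_eq_square power3_eq_cube)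

lemma Q_le_max:
  fixes k h0 ys y :: real
  assumes "h0 \<ge> 0" "ys \<ge> 0" "0 \<le> y" "y \<le> 1/2"
  shows "k*y^2 + (k*ys - h0)*y + C \<le> max C (k*(1/2)^2 + (k*ys - h0)*(1/2) + C)"
proof (cases "k \<le> 0")
  case True
  have "k*y^2 \<le> 0" using True by (simp add: mult_nonpos_nonneg)
  moreover have "k*ys \<le> 0" using True assms by (intro mult_nonpos_nonneg) auto
  then have "(k*ys - h0)*y \<le> 0"
    by (intro mult_nonpos_nonneg) (use \<open>k*ys \<le> 0\<close> assms in auto)
  ultimately show ?thesis by auto
next
  case False
  have eq: "k*y^2 + (k*ys - h0)*y + C = (1 - 2*y)*C + (2*y)*(k*(1/2)^2 + (k*ys - h0)*(1/2) + C) + k*(y*(y - 1/2))"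
    by (simp add: field_simps power2_eq_square)
  have "k*(y*(y - 1/2)) \<le> 0" using False assms by (intro mult_nonneg_nonpos) (auto intro: mult_nonneg_nonpos)
  moreover have "(1 - 2*y)*C + (2*y)*(k*(1/2)^2 + (k*ys - h0)*(1/2) + C)
      \<le> (1 - 2*y)*max C (k*(1/2)^2 + (k*ys - h0)*(1/2) + C) + (2*y)*max C (k*(1/2)^2 + (k*ys - h0)*(1/2) + C)"
    using assms by (intro add_mono mult_left_mono) auto
  ultimately show ?thesis unfolding eq by (simp add: algebra_simps)
qed

definition g1 :: "real \<Rightarrow> real \<Rightarrow> real \<Rightarrow> real \<Rightarrow> real \<Rightarrow> real" where
  "g1 c d \<mu> u x = x * (1 - x) * (x * (d - c) + u - d) + \<mu> * (1 - 2 * x)"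

definition Qx :: "real \<Rightarrow> real \<Rightarrow> real \<Rightarrow> real \<Rightarrow> real \<Rightarrow> real \<Rightarrow> real" where
  "Qx c d \<mu> u xs x = (let k = c - d; h0 = u - (c + d)/2; ys = xs - 1/2; y = x - 1/2 in
     k*y^2 + (k*ys - h0)*y + (k*ys^2 - h0*ys - k/4 - 2*\<mu>))"

lemma g1_G: "g1 c d \<mu> u x = (let k = c - d; h0 = u - (c + d)/2; y = x - 1/2 in
   h0/4 - (k/4 + 2*\<mu>)*y - h0*y^2 + k*y^3)"
  unfolding g1_def Let_def by (simp add: field_simps power2_eq_square power3_eq_cube)

lemma g1_factor:
  assumes "g1 c d \<mu> u xs = 0"
  shows "g1 c d \<mu> u x = (x - xs) * Qx c d \<mu> u xs x"
proof -
  have "g1 c d \<mu> u x = (x - 1/2 - (xs - 1/2)) * Qx c d \<mu> u xs x + g1 c d \<mu> u xs"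
    unfolding g1_G Qx_def Let_def by (rule cubic_Q)
  then show ?thesis using assms by simp
qed

lemma Qx_neg:
  assumes u: "u > (c + d)/2" and mu: "\<mu> > 0" and xs: "1/2 < xs" "xs < 1"
    and g: "g1 c d \<mu> u xs = 0"
  shows "Qx c d \<mu> u xs (1/2) < 0" "Qx c d \<mu> u xs 1 < 0"
    "\<And>x. 1/2 \<le> x \<Longrightarrow> x \<le> 1 \<Longrightarrow> Qx c d \<mu> u xs x \<le> max (Qx c d \<mu> u xs (1/2)) (Qx c d \<mu> u xs 1)"
proof -
  have f: "g1 c d \<mu> u x = (x - xs) * Qx c d \<mu> u xs x" for x by (rule g1_factor[OF g])
  have "g1 c d \<mu> u (1/2) = (u - (c + d)/2) / 4" unfolding g1_def by (simp add: field_simps)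
  then have "(1/2 - xs) * Qx c d \<mu> u xs (1/2) = (u - (c + d)/2) / 4" using f[of "1/2"] by simp
  then have "(1/2 - xs) * Qx c d \<mu> u xs (1/2) > 0" using u by (simp add: field_simps)
  then show q0: "Qx c d \<mu> u xs (1/2) < 0" using xs by (simp add: zero_less_mult_iff)
  have "g1 c d \<mu> u 1 = - \<mu>" unfolding g1_def by simp
  then have "(1 - xs) * Qx c d \<mu> u xs 1 < 0" using f[of 1] mu by simp
  then show "Qx c d \<mu> u xs 1 < 0" using xs by (simp add: mult_less_0_iff)
  fix x :: real assume x: "1/2 \<le> x" "x \<le> 1"
  have "(c - d)*(x - 1/2)^2 + ((c - d)*(xs - 1/2) - (u - (c + d)/2))*(x - 1/2) + ((c - d)*(xs - 1/2)^2 - (u - (c + d)/2)*(xs - 1/2) - (c - d)/4 - 2*\<mu>)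
     \<le> max ((c - d)*(xs - 1/2)^2 - (u - (c + d)/2)*(xs - 1/2) - (c - d)/4 - 2*\<mu>)
        ((c - d)*(1/2)^2 + ((c - d)*(xs - 1/2) - (u - (c + d)/2))*(1/2) + ((c - d)*(xs - 1/2)^2 - (u - (c + d)/2)*(xs - 1/2) - (c - d)/4 - 2*\<mu>))"
    by (rule Q_le_max) (use u xs x in auto)
  then show "Qx c d \<mu> u xs x \<le> max (Qx c d \<mu> u xs (1/2)) (Qx c d \<mu> u xs 1)"
    unfolding Qx_def Let_def by simp
qed

lemma field_r1: "fst (ctrl_field a b c d \<mu> u (x, 1)) = g1 c d \<mu> u x"
  unfolding ctrl_field_def g1_def by (simp add: algebra_simps)

lemma classify:
  fixes a b c d \<mu> u xs x r :: real
  assumes pos: "a > 0" "b > 0" "c > 0" "d > 0" and mu: "0 < \<mu>"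
    and u: "u > (c + d) / 2" and xs: "1 / 2 < xs" "xs < 1"
    and eqs: "equilibrium (ctrl_field a b c d \<mu> u) unit_square (xs, 1)"
    and eqp: "equilibrium (ctrl_field a b c d \<mu> u) unit_square (x, r)"
    and ne: "(x, r) \<noteq> (xs, 1)"
  shows "(r = 0 \<and> 1/2 < x \<and> x \<le> 1) \<or> (r = 1 \<and> 0 \<le> x \<and> x < 1/2)"
proof -
  have gxs: "g1 c d \<mu> u xs = 0" using eqs field_r1[of a b c d \<mu> u xs]
    unfolding equilibrium_def by simp
  have sq: "0 \<le> x" "x \<le> 1" "0 \<le> r" "r \<le> 1" using eqp unfolding equilibrium_def unit_square_def by auto
  have F1: "x * (1 - x) * (x * r * (- c + d - a + b) + x * (a - b) - r * (d + b) + b + u) + \<mu> * (1 - 2 * x) = 0"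
    and F2: "r * (1 - r) * (2 * x - 1) = 0"
    using eqp unfolding equilibrium_def ctrl_field_def by (auto simp: zero_prod_def)
  have xh: "x \<noteq> 1/2"
  proof
    assume x: "x = 1/2"
    have "x * (1 - x) * (x * r * (- c + d - a + b) + x * (a - b) - r * (d + b) + b + u) + \<mu> * (1 - 2 * x)
        = ((u - (c + d)/2) + (1 - r) * (a + b + c + d) / 2) / 4"
      unfolding x by (simp add: field_simps)
    moreover have "(1 - r) * (a + b + c + d) / 2 \<ge> 0" using sq pos by simp
    ultimately show False using F1 u by simp
  qed
  have "r = 0 \<or> r = 1" using F2 xh by auto
  then show ?thesis
  proof
    assume r: "r = 0"
    have "x > 1/2"
    proof (rule ccontr)
      assume "\<not> x > 1/2"
      then have x: "x < 1/2" using xh by simp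
      have "x * (a - b) + b + u = x * a + (1 - x) * b + u" by (simp add: algebra_simps)
      moreover have "x * a + (1 - x) * b + u > 0" using x sq pos u by (intro add_nonneg_pos add_nonneg_nonneg) auto
      ultimately have "x * (1 - x) * (x * (a - b) + b + u) \<ge> 0" using sq x by simp
      moreover have "\<mu> * (1 - 2 * x) > 0" using mu x by simp
      ultimately show False using F1 r by simp
    qed
    then show ?thesis using r sq by simp
  next
    assume r: "r = 1"
    have "x < 1/2"
    proof (rule ccontr)
      assume "\<not> x < 1/2"
      then have x: "x > 1/2" using xh by simp
      have g: "g1 c d \<mu> u x = 0" using eqp field_r1[of a b c d \<mu> u x] r unfolding equilibrium_def by simp
      have "Qx c d \<mu> u xs x < 0"
        using Qx_neg[OF u mu xs gxs] x sq by (smt (verit))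
      moreover have "(x - xs) * Qx c d \<mu> u xs x = 0" using g g1_factor[OF gxs, of x] by simp
      ultimately have "x = xs" by simp
      then show False using ne r by simp
    qed
    then show ?thesis using r sq by simp
  qed
qed



lemma exp_growth:
  fixes s s' :: "real \<Rightarrow> real"
  assumes d: "\<And>t. t \<ge> 0 \<Longrightarrow> (s has_real_derivative s' t) (at t within {0..})"
    and g: "\<And>t. t \<ge> 0 \<Longrightarrow> s' t \<ge> \<kappa> * s t" and t: "t \<ge> 0"
  shows "s t \<ge> s 0 * exp (\<kappa> * t)"
proof -
  define w where "w t = s t * exp (- (\<kappa> * t))" for t
  have "w 0 \<le> w t"
  proof (rule mono_Ici[where h = w and h' = "\<lambda>t. exp (- (\<kappa> * t)) * (s' t - \<kappa> * s t)"])
    show "(w has_real_derivative exp (- (\<kappa> * t)) * (s' t - \<kappa> * s t)) (at t within {0..})" if "t \<ge> 0" for t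
      unfolding w_def using d[OF that]
      by (auto intro!: derivative_eq_intros simp: algebra_simps)
    show "exp (- (\<kappa> * x)) * (s' x - \<kappa> * s x) \<ge> 0" if "0 < x" "x < t" for x
      using g[of x] that by simp
  qed (use t in auto)
  then have "s 0 \<le> s t * exp (- (\<kappa> * t))" unfolding w_def by simp
  then have "s 0 * exp (\<kappa> * t) \<le> s t * exp (- (\<kappa> * t)) * exp (\<kappa> * t)" by (simp add: mult_right_mono)
  also have "\<dots> = s t" by (simp add: mult.assoc flip: exp_add)
  finally show ?thesis .
qed

lemma unstable_intro:
  assumes "\<epsilon> > 0" "\<And>\<delta>. \<delta> > 0 \<Longrightarrow> \<exists>\<phi>. is_solution f S \<phi> \<and> dist (\<phi> 0) p < \<delta> \<and> (\<exists>t\<ge>0. dist (\<phi> t) p \<ge> \<epsilon>)"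
  shows "unstable f S p"
  unfolding unstable_def lyapunov_stable_def using assms by (meson not_less)

lemma sol_derivs:
  assumes "is_solution (ctrl_field a b c d \<mu> u) unit_square \<phi>" "t \<ge> 0"
  shows "((\<lambda>t. fst (\<phi> t)) has_real_derivative
      fst (\<phi> t) * (1 - fst (\<phi> t)) * (fst (\<phi> t) * snd (\<phi> t) * (- c + d - a + b) + fst (\<phi> t) * (a - b) - snd (\<phi> t) * (d + b) + b + u) + \<mu> * (1 - 2 * fst (\<phi> t)))
      (at t within {0..})"
    and "((\<lambda>t. snd (\<phi> t)) has_real_derivative snd (\<phi> t) * (1 - snd (\<phi> t)) * (2 * fst (\<phi> t) - 1)) (at t within {0..})"
    and "0 \<le> fst (\<phi> t)" "fst (\<phi> t) \<le> 1" "0 \<le> snd (\<phi> t)" "snd (\<phi> t) \<le> 1"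
proof -
  have dv: "(\<phi> has_vector_derivative ctrl_field a b c d \<mu> u (\<phi> t)) (at t within {0..})"
    using assms unfolding is_solution_def by auto
  show "((\<lambda>t. fst (\<phi> t)) has_real_derivative
      fst (\<phi> t) * (1 - fst (\<phi> t)) * (fst (\<phi> t) * snd (\<phi> t) * (- c + d - a + b) + fst (\<phi> t) * (a - b) - snd (\<phi> t) * (d + b) + b + u) + \<mu> * (1 - 2 * fst (\<phi> t)))
      (at t within {0..})"
    using vd_fst[OF dv] unfolding ctrl_field_def by (simp add: case_prod_beta)
  show "((\<lambda>t. snd (\<phi> t)) has_real_derivative snd (\<phi> t) * (1 - snd (\<phi> t)) * (2 * fst (\<phi> t) - 1)) (at t within {0..})"
    using vd_snd[OF dv] unfolding ctrl_field_def by (simp add: case_prod_beta)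
  have "\<phi> t \<in> unit_square" using assms unfolding is_solution_def by auto
  then show "0 \<le> fst (\<phi> t)" "fst (\<phi> t) \<le> 1" "0 \<le> snd (\<phi> t)" "snd (\<phi> t) \<le> 1"
    unfolding unit_square_def by (auto simp: mem_Times_iff)
qed

lemma dist_comp:
  fixes z p :: "real \<times> real"
  shows "\<bar>fst z - fst p\<bar> \<le> dist z p" "\<bar>snd z - snd p\<bar> \<le> dist z p"
  using dist_fst_le[of z p] dist_snd_le[of z p] by (auto simp: dist_real_def)

lemma unstable_r0:
  fixes a b c d \<mu> u x0 :: real
  assumes mu: "\<mu> > 0" and x0: "1/2 < x0" "x0 \<le> 1"
  shows "unstable (ctrl_field a b c d \<mu> u) unit_square (x0, 0)"
proof -
  define \<beta> where "\<beta> = x0 - 1/2"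
  define \<epsilon> where "\<epsilon> = \<beta> / 2"
  have \<beta>: "\<beta> > 0" "\<beta> \<le> 1/2" using x0 unfolding \<beta>_def by auto
  have \<epsilon>: "\<epsilon> > 0" "\<epsilon> \<le> 1/4" using \<beta> unfolding \<epsilon>_def by auto
  show ?thesis
  proof (rule unstable_intro[OF \<epsilon>(1)])
    fix \<delta> :: real assume \<delta>: "\<delta> > 0"
    define \<eta> where "\<eta> = min (\<delta>/2) (\<epsilon>/2)"
    have \<eta>: "\<eta> > 0" "\<eta> < \<delta>" "\<eta> \<le> \<epsilon>/2" using \<delta> \<epsilon> unfolding \<eta>_def by auto
    have "(x0, \<eta>) \<in> unit_square" using x0 \<eta> \<epsilon> unfolding unit_square_def by auto
    then obtain \<phi> where \<phi>0: "\<phi> 0 = (x0, \<eta>)" and sol: "is_solution (ctrl_field a b c d \<mu> u) unit_square \<phi>"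
      using solution_exists[OF mu] by blast
    have d0: "dist (\<phi> 0) (x0, 0) < \<delta>" using \<phi>0 \<eta> by (simp add: dist_Pair_Pair)
    have "\<exists>t\<ge>0. dist (\<phi> t) (x0, 0) \<ge> \<epsilon>"
    proof (rule ccontr)
      assume "\<not> ?thesis"
      then have inb: "dist (\<phi> t) (x0, 0) < \<epsilon>" if "t \<ge> 0" for t using that by auto
      define R where "R t = snd (\<phi> t)" for t
      define X where "X t = fst (\<phi> t)" for t
      have dR: "(R has_real_derivative R t * (1 - R t) * (2 * X t - 1)) (at t within {0..})" if "t \<ge> 0" for t
        unfolding R_def X_def using sol_derivs(2)[OF sol that] by simp
      have gr: "R t * (1 - R t) * (2 * X t - 1) \<ge> (\<beta>/2) * R t" if t: "t \<ge> 0" for t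
      proof -
        have R0: "R t \<ge> 0" unfolding R_def using sol_derivs(5)[OF sol t] .
        have "\<bar>X t - x0\<bar> < \<epsilon>" "\<bar>R t - 0\<bar> < \<epsilon>"
          using dist_comp[of "\<phi> t" "(x0, 0)"] inb[OF t] unfolding X_def R_def by auto
        then have a1: "x0 - \<epsilon> < X t" and a2: "R t < \<epsilon>" by (auto simp: abs_less_iff)
        have e2: "2 * \<epsilon> = \<beta>" and b2: "\<beta> = x0 - 1/2" unfolding \<epsilon>_def \<beta>_def by auto
        have h1: "1 - R t \<ge> 1/2" using a2 \<epsilon> by linarith
        have h2: "2 * X t - 1 \<ge> \<beta>" using a1 e2 b2 by linarith
        have "(1/2) * \<beta> \<le> (1 - R t) * (2 * X t - 1)"
          by (rule mult_mono[OF h1 h2]) (use \<beta> h1 in auto)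
        then have "R t * ((1/2) * \<beta>) \<le> R t * ((1 - R t) * (2 * X t - 1))"
          by (rule mult_left_mono[OF _ R0])
        then show ?thesis by (simp add: mult_ac)
      qed
      define T where "T = 2 / \<beta> * ln (\<epsilon> / \<eta>)"
      have T0: "T \<ge> 0" unfolding T_def using \<beta> \<eta> \<epsilon> by (auto intro!: ln_ge_zero simp: field_simps)
      have "R T \<ge> R 0 * exp ((\<beta>/2) * T)"
        by (rule exp_growth[OF dR gr T0])
      moreover have "exp ((\<beta>/2) * T) = \<epsilon> / \<eta>"
        unfolding T_def using \<beta> \<eta> \<epsilon> by simp
      moreover have "R 0 = \<eta>" unfolding R_def \<phi>0 by simp
      ultimately have "R T \<ge> \<epsilon>" using \<eta> by simp
      moreover have "\<bar>R T - 0\<bar> < \<epsilon>" using dist_comp(2)[of "\<phi> T" "(x0, 0)"] inb[OF T0] unfolding R_def by simp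
      ultimately show False by simp
    qed
    then show "\<exists>\<phi>. is_solution (ctrl_field a b c d \<mu> u) unit_square \<phi> \<and> dist (\<phi> 0) (x0, 0) < \<delta> \<and> (\<exists>t\<ge>0. dist (\<phi> t) (x0, 0) \<ge> \<epsilon>)"
      using sol d0 by blast
  qed
qed

lemma unstable_r1:
  fixes a b c d \<mu> u x1 :: real
  assumes mu: "\<mu> > 0" and x1: "0 \<le> x1" "x1 < 1/2"
  shows "unstable (ctrl_field a b c d \<mu> u) unit_square (x1, 1)"
proof -
  define \<beta> where "\<beta> = 1/2 - x1"
  define \<epsilon> where "\<epsilon> = \<beta> / 2"
  have \<beta>: "\<beta> > 0" "\<beta> \<le> 1/2" using x1 unfolding \<beta>_def by auto
  have \<epsilon>: "\<epsilon> > 0" "\<epsilon> \<le> 1/4" using \<beta> unfolding \<epsilon>_def by auto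
  show ?thesis
  proof (rule unstable_intro[OF \<epsilon>(1)])
    fix \<delta> :: real assume \<delta>: "\<delta> > 0"
    define \<eta> where "\<eta> = min (\<delta>/2) (\<epsilon>/2)"
    have \<eta>: "\<eta> > 0" "\<eta> < \<delta>" "\<eta> \<le> \<epsilon>/2" using \<delta> \<epsilon> unfolding \<eta>_def by auto
    have "(x1, 1 - \<eta>) \<in> unit_square" using x1 \<eta> \<epsilon> unfolding unit_square_def by auto
    then obtain \<phi> where \<phi>0: "\<phi> 0 = (x1, 1 - \<eta>)" and sol: "is_solution (ctrl_field a b c d \<mu> u) unit_square \<phi>"
      using solution_exists[OF mu] by blast
    have d0: "dist (\<phi> 0) (x1, 1) < \<delta>" using \<phi>0 \<eta> by (simp add: dist_Pair_Pair dist_real_def)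
    have "\<exists>t\<ge>0. dist (\<phi> t) (x1, 1) \<ge> \<epsilon>"
    proof (rule ccontr)
      assume "\<not> ?thesis"
      then have inb: "dist (\<phi> t) (x1, 1) < \<epsilon>" if "t \<ge> 0" for t using that by auto
      define S where "S t = 1 - snd (\<phi> t)" for t
      define X where "X t = fst (\<phi> t)" for t
      have dS: "(S has_real_derivative - ((1 - S t) * (1 - (1 - S t)) * (2 * X t - 1))) (at t within {0..})" if "t \<ge> 0" for t
        unfolding S_def X_def using sol_derivs(2)[OF sol that] by (auto intro!: derivative_eq_intros)
      have gr: "- ((1 - S t) * (1 - (1 - S t)) * (2 * X t - 1)) \<ge> (\<beta>/2) * S t" if t: "t \<ge> 0" for t
      proof -
        have S0: "S t \<ge> 0" unfolding S_def using sol_derivs(6)[OF sol t] by simp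
        have "\<bar>X t - x1\<bar> < \<epsilon>" "\<bar>(1 - S t) - 1\<bar> < \<epsilon>"
          using dist_comp[of "\<phi> t" "(x1, 1)"] inb[OF t] unfolding X_def S_def by auto
        then have a1: "X t < x1 + \<epsilon>" and a2: "S t < \<epsilon>" by (auto simp: abs_less_iff)
        have e2: "2 * \<epsilon> = \<beta>" and b2: "\<beta> = 1/2 - x1" unfolding \<epsilon>_def \<beta>_def by auto
        have h1: "1 - S t \<ge> 1/2" using a2 \<epsilon> by linarith
        have h2: "1 - 2 * X t \<ge> \<beta>" using a1 e2 b2 by linarith
        have "(1/2) * \<beta> \<le> (1 - S t) * (1 - 2 * X t)"
          by (rule mult_mono[OF h1 h2]) (use \<beta> h1 in auto)
        then have "S t * ((1/2) * \<beta>) \<le> S t * ((1 - S t) * (1 - 2 * X t))"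
          by (rule mult_left_mono[OF _ S0])
        moreover have "- ((1 - S t) * (1 - (1 - S t)) * (2 * X t - 1)) = S t * ((1 - S t) * (1 - 2 * X t))"
          by (simp add: algebra_simps)
        ultimately show ?thesis by (simp add: mult_ac)
      qed
      define T where "T = 2 / \<beta> * ln (\<epsilon> / \<eta>)"
      have T0: "T \<ge> 0" unfolding T_def using \<beta> \<eta> \<epsilon> by (auto intro!: ln_ge_zero simp: field_simps)
      have "S T \<ge> S 0 * exp ((\<beta>/2) * T)"
        by (rule exp_growth[OF dS gr T0])
      moreover have "exp ((\<beta>/2) * T) = \<epsilon> / \<eta>"
        unfolding T_def using \<beta> \<eta> \<epsilon> by simp
      moreover have "S 0 = \<eta>" unfolding S_def \<phi>0 by simp
      ultimately have "S T \<ge> \<epsilon>" using \<eta> by simp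
      moreover have "\<bar>snd (\<phi> T) - 1\<bar> < \<epsilon>" using dist_comp(2)[of "\<phi> T" "(x1, 1)"] inb[OF T0] by simp
      ultimately show False unfolding S_def by (simp add: abs_less_iff)
    qed
    then show "\<exists>\<phi>. is_solution (ctrl_field a b c d \<mu> u) unit_square \<phi> \<and> dist (\<phi> 0) (x1, 1) < \<delta> \<and> (\<exists>t\<ge>0. dist (\<phi> t) (x1, 1) \<ge> \<epsilon>)"
      using sol d0 by blast
  qed
qed



lemma exp_neg_tendsto:
  fixes \<gamma> :: real assumes "\<gamma> > 0"
  shows "((\<lambda>t. exp (- (\<gamma> * t))) \<longlongrightarrow> 0) at_top"
proof -
  have "LIM t at_top. \<gamma> * t :> at_top"
    by (rule filterlim_tendsto_pos_mult_at_top[OF tendsto_const assms filterlim_ident])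
  then have "LIM t at_top. - (\<gamma> * t) :> at_bot"
    by (simp add: filterlim_uminus_at_bot)
  then show ?thesis by (rule filterlim_compose[OF exp_at_bot])
qed

lemma F1_split:
  "x * (1 - x) * (x * r * (- c + d - a + b) + x * (a - b) - r * (d + b) + b + u) + \<mu> * (1 - 2 * x)
   = g1 c d \<mu> u x + (1 - r) * (x * (1 - x) * ((d + b) * (1 - x) + x * (c + a)))"
  unfolding g1_def by (simp add: algebra_simps)

lemma m_bounds:
  fixes x a b c d :: real
  assumes "0 \<le> x" "x \<le> 1" "a > 0" "b > 0" "c > 0" "d > 0"
  shows "0 \<le> x * (1 - x) * ((d + b) * (1 - x) + x * (c + a))"
    "x * (1 - x) * ((d + b) * (1 - x) + x * (c + a)) \<le> a + b + c + d"
proof -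
  have p: "0 \<le> x * (1 - x)" "x * (1 - x) \<le> 1" using assms mult_le_one[of x "1 - x"] by auto
  have q: "0 \<le> (d + b) * (1 - x) + x * (c + a)" using assms by auto
  have "(d + b) * (1 - x) \<le> d + b" using assms by (simp add: mult_left_le)
  moreover have "x * (c + a) \<le> c + a" using assms by (simp add: mult_left_le_one_le)
  ultimately have q2: "(d + b) * (1 - x) + x * (c + a) \<le> a + b + c + d" by simp
  show "0 \<le> x * (1 - x) * ((d + b) * (1 - x) + x * (c + a))" using p q by simp
  have "x * (1 - x) * ((d + b) * (1 - x) + x * (c + a)) \<le> 1 * (a + b + c + d)"
    by (rule mult_mono[OF p(2) q2]) (use q in auto)
  then show "x * (1 - x) * ((d + b) * (1 - x) + x * (c + a)) \<le> a + b + c + d" by simp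
qed

lemma DV_bound:
  fixes a b c d \<mu> u xs x r \<alpha> \<gamma> K M \<beta> m g Q :: real
  assumes x: "0 \<le> x" "x \<le> 1" and r: "1/2 < r" "r \<le> 1"
    and close: "\<bar>x - xs\<bar> < \<beta> / 2" and \<beta>: "\<beta> > 0" "\<beta> = xs - 1/2"
    and M: "M > 0" and K: "K * \<beta> = 4 * M"
    and m: "0 \<le> m" "m \<le> M" and gQ: "g = (x - xs) * Q" and Q: "Q \<le> - \<alpha>"
    and \<gamma>: "\<gamma> \<le> 2 * \<alpha>" "\<gamma> * K \<le> M" "\<gamma> \<ge> 0" and \<beta>2: "\<beta> \<le> 1/2"
  shows "2 * (x - xs) * (g + (1 - r) * m) - K * (r * (1 - r) * (2 * x - 1)) \<le> - \<gamma> * ((x - xs)^2 + K * (1 - r))"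
proof -
  have s0: "0 \<le> 1 - r" using r by simp
  have "K * \<beta> > 0" using K M by simp
  then have K0: "K > 0" using \<beta> by (simp add: zero_less_mult_iff)
  have t1: "2 * (x - xs) * g \<le> - 2 * \<alpha> * (x - xs)^2"
  proof -
    have "2 * (x - xs) * g = 2 * (x - xs)^2 * Q" unfolding gQ by (simp add: power2_eq_square)
    also have "\<dots> \<le> 2 * (x - xs)^2 * (- \<alpha>)" by (rule mult_left_mono[OF Q]) simp
    finally show ?thesis by (simp add: mult_ac)
  qed
  have t2: "2 * (x - xs) * ((1 - r) * m) \<le> (1 - r) * M"
  proof -
    have "2 * (x - xs) * ((1 - r) * m) \<le> 2 * \<bar>x - xs\<bar> * ((1 - r) * m)"
      by (rule mult_right_mono) (use s0 m abs_ge_self[of "x - xs"] in auto)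
    also have "\<dots> \<le> 1 * ((1 - r) * M)"
      using close \<beta>2 s0 m by (intro mult_mono) auto
    finally show ?thesis by simp
  qed
  have t3: "K * (r * (1 - r) * (2 * x - 1)) \<ge> 2 * M * (1 - r)"
  proof -
    have "- (x - xs) \<le> \<bar>x - xs\<bar>" by (rule abs_ge_minus_self)
    then have c1: "xs - x < \<beta> / 2" using close by linarith
    have hx: "2 * x - 1 \<ge> \<beta>" using c1 \<beta>(2) by linarith
    have "(1/2) * \<beta> \<le> r * (2 * x - 1)" by (rule mult_mono) (use r hx \<beta> in auto)
    then have "(1 - r) * ((1/2) * \<beta>) \<le> (1 - r) * (r * (2 * x - 1))" by (rule mult_left_mono[OF _ s0])
    then have "K * ((1 - r) * ((1/2) * \<beta>)) \<le> K * ((1 - r) * (r * (2 * x - 1)))"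
      by (rule mult_left_mono) (use K0 in auto)
    moreover have "K * ((1 - r) * ((1/2) * \<beta>)) = (K * \<beta>) * (1 - r) / 2" by (simp add: algebra_simps)
    then have "K * ((1 - r) * ((1/2) * \<beta>)) = 2 * M * (1 - r)" using K by simp
    ultimately show ?thesis by (simp add: algebra_simps)
  qed
  have t4: "\<gamma> * ((x - xs)^2 + K * (1 - r)) \<le> 2 * \<alpha> * (x - xs)^2 + M * (1 - r)"
  proof -
    have "\<gamma> * (x - xs)^2 \<le> 2 * \<alpha> * (x - xs)^2" by (rule mult_right_mono[OF \<gamma>(1)]) simp
    moreover have "\<gamma> * K * (1 - r) \<le> M * (1 - r)" by (rule mult_right_mono[OF \<gamma>(2) s0])
    ultimately show ?thesis by (simp add: algebra_simps)
  qed
  have "2 * (x - xs) * (g + (1 - r) * m) = 2 * (x - xs) * g + 2 * (x - xs) * ((1 - r) * m)"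
    by (simp add: algebra_simps)
  then show ?thesis using t1 t2 t3 t4 by (simp add: algebra_simps)
qed

lemma stable_xs:
  fixes a b c d \<mu> u xs :: real
  assumes pos: "a > 0" "b > 0" "c > 0" "d > 0" and mu: "0 < \<mu>" and u: "u > (c + d) / 2"
    and xs: "1/2 < xs" "xs < 1" and gxs: "g1 c d \<mu> u xs = 0"
  shows "loc_asympt_stable (ctrl_field a b c d \<mu> u) unit_square (xs, 1)"
proof -
  define \<beta> where "\<beta> = xs - 1/2"
  define M where "M = a + b + c + d"
  define K where "K = 4 * M / \<beta>"
  define \<alpha> where "\<alpha> = - max (Qx c d \<mu> u xs (1/2)) (Qx c d \<mu> u xs 1)"
  define \<gamma> where "\<gamma> = min (2 * \<alpha>) (M / K)"
  define v0 where "v0 = min ((\<beta>/2)^2) (K/2)"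
  define V where "V z = (fst z - xs)^2 + K * (1 - snd z)" for z :: "real \<times> real"
  have \<beta>: "\<beta> > 0" "\<beta> \<le> 1/2" "\<beta> = xs - 1/2" using xs unfolding \<beta>_def by auto
  have M: "M > 0" unfolding M_def using pos by simp
  have K: "K > 0" "K * \<beta> = 4 * M" unfolding K_def using \<beta> M by auto
  have \<alpha>: "\<alpha> > 0" unfolding \<alpha>_def using Qx_neg(1,2)[OF u mu xs gxs] by simp
  have Qle: "Qx c d \<mu> u xs x \<le> - \<alpha>" if "1/2 \<le> x" "x \<le> 1" for x
    unfolding \<alpha>_def using Qx_neg(3)[OF u mu xs gxs that] by simp
  have \<gamma>: "\<gamma> > 0" "\<gamma> \<le> 2 * \<alpha>" "\<gamma> * K \<le> M"
    unfolding \<gamma>_def using \<alpha> M K by (auto simp: min_def field_simps)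
  have v0: "v0 > 0" "v0 \<le> (\<beta>/2)^2" "v0 \<le> K/2" unfolding v0_def using \<beta> K by auto
  have key: "\<forall>t\<ge>0. V (\<phi> t) \<le> V (\<phi> 0) * exp (- (\<gamma> * t))"
    if sol: "is_solution (ctrl_field a b c d \<mu> u) unit_square \<phi>" and init: "V (\<phi> 0) < v0" for \<phi>
  proof -
    define X where "X t = fst (\<phi> t)" for t
    define R where "R t = snd (\<phi> t)" for t
    define Vt where "Vt t = V (\<phi> t)" for t
    define DV where "DV t = 2 * (X t - xs) * (X t * (1 - X t) * (X t * R t * (- c + d - a + b) + X t * (a - b) - R t * (d + b) + b + u) + \<mu> * (1 - 2 * X t))
       - K * (R t * (1 - R t) * (2 * X t - 1))" for t
    have dV: "(Vt has_real_derivative DV t) (at t within {0..})" if "t \<ge> 0" for t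
    proof -
      have dX: "(X has_real_derivative (X t * (1 - X t) * (X t * R t * (- c + d - a + b) + X t * (a - b) - R t * (d + b) + b + u) + \<mu> * (1 - 2 * X t))) (at t within {0..})"
        unfolding X_def R_def using sol_derivs(1)[OF sol that] by simp
      have dR: "(R has_real_derivative (R t * (1 - R t) * (2 * X t - 1))) (at t within {0..})"
        unfolding X_def R_def using sol_derivs(2)[OF sol that] by simp
      have "Vt = (\<lambda>t. (X t - xs)^2 + K * (1 - R t))" unfolding Vt_def V_def X_def R_def by auto
      then show ?thesis unfolding DV_def
        by (auto intro!: derivative_eq_intros dX dR simp: algebra_simps)
    qed
    have sqr: "0 \<le> X t" "X t \<le> 1" "0 \<le> R t" "R t \<le> 1" if "t \<ge> 0" for t
      unfolding X_def R_def using sol_derivs(3-6)[OF sol that] by auto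
    have Vt_eq: "Vt t = (X t - xs)^2 + K * (1 - R t)" for t unfolding Vt_def V_def X_def R_def by simp
    have Vnn: "Vt t \<ge> 0" if "t \<ge> 0" for t
      unfolding Vt_eq using sqr[OF that] K by simp
    have region: "DV t \<le> - \<gamma> * Vt t" if t: "t \<ge> 0" and lt: "Vt t < v0" for t
    proof -
      have kr: "K * (1 - R t) \<ge> 0" using K(1) sqr[OF t] by simp
      have sq: "(X t - xs)^2 < (\<beta>/2)^2" using lt v0(2) kr unfolding Vt_eq by linarith
      have cl: "\<bar>X t - xs\<bar> < \<beta>/2"
        by (rule power2_less_imp_less) (use sq \<beta> in auto)
      have "K * (1 - R t) < K / 2" using lt v0(3) zero_le_power2[of "X t - xs"] unfolding Vt_eq by linarith
      then have rh: "1/2 < R t" using K by (simp add: field_simps)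
      have "- (X t - xs) \<le> \<bar>X t - xs\<bar>" by (rule abs_ge_minus_self)
      then have "xs - X t < \<beta>/2" using cl by linarith
      then have xh: "1/2 \<le> X t" using \<beta> by linarith
      show ?thesis
        unfolding DV_def Vt_eq F1_split
      proof (rule DV_bound[where \<alpha> = \<alpha> and M = M and \<beta> = \<beta>])
        show "0 \<le> X t * (1 - X t) * ((d + b) * (1 - X t) + X t * (c + a))"
          "X t * (1 - X t) * ((d + b) * (1 - X t) + X t * (c + a)) \<le> M"
          unfolding M_def using m_bounds[OF sqr(1,2)[OF t] pos] by auto
        show "g1 c d \<mu> u (X t) = (X t - xs) * Qx c d \<mu> u xs (X t)" by (rule g1_factor[OF gxs])
        show "Qx c d \<mu> u xs (X t) \<le> - \<alpha>" by (rule Qle) (use xh sqr[OF t] in auto)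
      qed (use sqr[OF t] rh cl \<beta> M K \<gamma> in auto)
    qed
    define W where "W t = exp (\<gamma> * t) * Vt t" for t
    have Wdec: "W s2 \<le> W s1" if "0 \<le> s1" "s1 \<le> s2" and reg: "\<And>s. s1 < s \<Longrightarrow> s < s2 \<Longrightarrow> Vt s < v0" for s1 s2
    proof -
      have "(\<lambda>s. - W s) s1 \<le> (\<lambda>s. - W s) s2"
      proof (rule mono_Ici[where h = "\<lambda>s. - W s" and h' = "\<lambda>s. - (exp (\<gamma> * s) * (\<gamma> * Vt s + DV s))"])
        show "((\<lambda>s. - W s) has_real_derivative - (exp (\<gamma> * s) * (\<gamma> * Vt s + DV s))) (at s within {0..})"
          if "s \<ge> 0" for s
          unfolding W_def using dV[OF that]
          by (auto intro!: derivative_eq_intros simp: algebra_simps)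
        show "0 \<le> - (exp (\<gamma> * s) * (\<gamma> * Vt s + DV s))" if "s1 < s" "s < s2" for s
        proof -
          have "DV s \<le> - \<gamma> * Vt s" by (rule region) (use that reg \<open>0 \<le> s1\<close> in auto)
          then have "\<gamma> * Vt s + DV s \<le> 0" by simp
          then show ?thesis by (simp add: mult_nonneg_nonpos)
        qed
      qed (use that in auto)
      then show ?thesis by simp
    qed
    have all: "Vt t < v0" if t: "t \<ge> 0" for t
    proof (rule ccontr)
      assume "\<not> Vt t < v0"
      then have "v0 \<le> Vt t" by simp
      moreover have "continuous_on {0..} Vt" by (rule cont_Ici[OF dV])
      moreover have "Vt 0 < v0" using init unfolding Vt_def .
      ultimately obtain t0 where t0: "0 < t0" "t0 \<le> t" "v0 \<le> Vt t0" "\<forall>s. 0 \<le> s \<and> s < t0 \<longrightarrow> Vt s < v0"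
        using first_exit[of Vt v0 t] t by blast
      have "W t0 \<le> W 0" by (rule Wdec) (use t0 in auto)
      moreover have "W 0 = Vt 0" unfolding W_def by simp
      moreover have "Vt t0 \<le> W t0"
      proof -
        have "1 * Vt t0 \<le> exp (\<gamma> * t0) * Vt t0"
          by (rule mult_right_mono) (use \<gamma> t0 Vnn[of t0] in auto)
        then show ?thesis unfolding W_def by simp
      qed
      ultimately show False using \<open>Vt 0 < v0\<close> t0 by linarith
    qed
    show ?thesis
    proof (intro allI impI)
      fix t :: real assume t: "0 \<le> t"
      have "W t \<le> W 0" by (rule Wdec) (use t all in auto)
      then have "exp (\<gamma> * t) * Vt t \<le> Vt 0" unfolding W_def by simp
      then have "Vt t \<le> Vt 0 / exp (\<gamma> * t)" by (simp add: field_simps)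
      then show "V (\<phi> t) \<le> V (\<phi> 0) * exp (- (\<gamma> * t))" unfolding Vt_def by (simp add: exp_minus field_simps)
    qed
  qed
  have dist_le: "dist z (xs, 1) \<le> sqrt (V z) + V z / K" if "snd z \<le> 1" for z
  proof -
    have "dist z (xs, 1) = norm (fst z - xs, snd z - 1)" unfolding dist_norm by (cases z) simp
    also have "\<dots> \<le> \<bar>fst z - xs\<bar> + \<bar>snd z - 1\<bar>" using norm_Pair_le[of "fst z - xs" "snd z - 1"] by simp
    also have "\<bar>fst z - xs\<bar> \<le> sqrt (V z)"
    proof -
      have "(fst z - xs)^2 \<le> V z" unfolding V_def using that K(1) by simp
      then have "sqrt ((fst z - xs)^2) \<le> sqrt (V z)" by (rule real_sqrt_le_mono)
      then show ?thesis by simp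
    qed
    also have "\<bar>snd z - 1\<bar> \<le> V z / K"
    proof -
      have "K * (1 - snd z) \<le> V z" unfolding V_def by simp
      then have "1 - snd z \<le> V z / K" using K(1) by (simp add: field_simps)
      then show ?thesis using that by simp
    qed
    finally show ?thesis by simp
  qed
  have init_le: "V z \<le> dist z (xs, 1) * (1 + K)" if "dist z (xs, 1) \<le> 1" for z
  proof -
    define e where "e = dist z (xs, 1)"
    have e: "0 \<le> e" "e \<le> 1" using that unfolding e_def by auto
    have a1: "\<bar>fst z - xs\<bar> \<le> e" "\<bar>snd z - 1\<bar> \<le> e" using dist_comp[of z "(xs, 1)"] unfolding e_def by auto
    have "\<bar>fst z - xs\<bar>^2 \<le> e^2" by (rule power_mono[OF a1(1)]) simp
    also have "e^2 \<le> e" using e by (simp add: power2_eq_square mult_left_le_one_le)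
    finally have s1: "(fst z - xs)^2 \<le> e" by simp
    have "K * (1 - snd z) \<le> K * e" using a1(2) K(1) by (intro mult_left_mono) auto
    then show ?thesis unfolding V_def e_def[symmetric] using s1 by (simp add: algebra_simps)
  qed
  have Vnn: "V z \<ge> 0" if "z \<in> unit_square" for z
    using that K(1) unfolding V_def unit_square_def by (auto simp: mem_Times_iff)
  have sq: "\<phi> t \<in> unit_square" if "is_solution (ctrl_field a b c d \<mu> u) unit_square \<phi>" "t \<ge> 0" for \<phi> t
    using that unfolding is_solution_def by auto
  have lyap: "lyapunov_stable (ctrl_field a b c d \<mu> u) unit_square (xs, 1)"
    unfolding lyapunov_stable_def
  proof (intro allI impI)
    fix \<epsilon> :: real assume \<epsilon>: "\<epsilon> > 0"
    define w where "w = min (v0/2) (min (\<epsilon>^2/4) (\<epsilon> * K / 4))"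
    have w: "w > 0" "w \<le> v0/2" "w \<le> (\<epsilon>/2)^2" "w \<le> \<epsilon> * K / 4"
      unfolding w_def using v0 \<epsilon> K by (auto simp: power2_eq_square)
    define \<delta> where "\<delta> = min 1 (w / (1 + K))"
    have \<delta>12: "\<delta> > 0" "\<delta> \<le> 1"
      unfolding \<delta>_def using w K by auto
    have "\<delta> \<le> w / (1 + K)" unfolding \<delta>_def by simp
    then have "\<delta> * (1 + K) \<le> w / (1 + K) * (1 + K)" by (rule mult_right_mono) (use K in auto)
    also have "\<dots> = w" using K by simp
    finally have \<delta>: "\<delta> > 0" "\<delta> \<le> 1" "\<delta> * (1 + K) \<le> w" using \<delta>12 by auto
    show "\<exists>\<delta>>0. \<forall>\<phi>. is_solution (ctrl_field a b c d \<mu> u) unit_square \<phi> \<and> dist (\<phi> 0) (xs, 1) < \<delta> \<longrightarrow>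
            (\<forall>t\<ge>0. dist (\<phi> t) (xs, 1) < \<epsilon>)"
    proof (intro exI[of _ \<delta>] conjI allI impI)
      show "\<delta> > 0" by fact
      fix \<phi> and t :: real assume H: "is_solution (ctrl_field a b c d \<mu> u) unit_square \<phi> \<and> dist (\<phi> 0) (xs, 1) < \<delta>" and t: "0 \<le> t"
      then have sol: "is_solution (ctrl_field a b c d \<mu> u) unit_square \<phi>" and d0: "dist (\<phi> 0) (xs, 1) < \<delta>" by auto
      have "V (\<phi> 0) \<le> dist (\<phi> 0) (xs, 1) * (1 + K)" by (rule init_le) (use d0 \<delta> in auto)
      also have "\<dots> < \<delta> * (1 + K)" by (rule mult_strict_right_mono[OF d0]) (use K in auto)
      finally have V0: "V (\<phi> 0) < w" using \<delta> by simp
      have V00: "V (\<phi> 0) \<ge> 0" using Vnn sq[OF sol, of 0] by simp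
      have "V (\<phi> t) \<le> V (\<phi> 0) * exp (- (\<gamma> * t))" using key[OF sol] V0 w t by auto
      also have "\<dots> \<le> V (\<phi> 0)"
      proof (rule mult_right_le_one_le[OF V00])
        show "0 \<le> exp (- (\<gamma> * t))" by simp
        have "0 \<le> \<gamma> * t" using \<gamma> t by simp
        then show "exp (- (\<gamma> * t)) \<le> 1" by simp
      qed
      finally have Vt: "V (\<phi> t) < w" using V0 by simp
      have "dist (\<phi> t) (xs, 1) \<le> sqrt (V (\<phi> t)) + V (\<phi> t) / K"
        by (rule dist_le) (use sq[OF sol t] in \<open>auto simp: unit_square_def mem_Times_iff\<close>)
      also have "sqrt (V (\<phi> t)) \<le> \<epsilon> / 2"
      proof -
        have "sqrt (V (\<phi> t)) \<le> sqrt ((\<epsilon>/2)^2)" using Vt w by (intro real_sqrt_le_mono) auto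
        then show ?thesis using \<epsilon> by simp
      qed
      also have "V (\<phi> t) / K \<le> \<epsilon> / 4"
        using Vt w K(1) by (simp add: field_simps)
      finally show "dist (\<phi> t) (xs, 1) < \<epsilon>" using \<epsilon> by simp
    qed
  qed
  have attr: "\<exists>\<delta>>0. \<forall>\<phi>. is_solution (ctrl_field a b c d \<mu> u) unit_square \<phi> \<and> dist (\<phi> 0) (xs, 1) < \<delta> \<longrightarrow>
      (\<phi> \<longlongrightarrow> (xs, 1)) at_top"
  proof -
    define \<delta> where "\<delta> = min 1 (v0 / (1 + K))"
    have \<delta>12: "\<delta> > 0" "\<delta> \<le> 1"
      unfolding \<delta>_def using v0 K by auto
    have "\<delta> \<le> v0 / (1 + K)" unfolding \<delta>_def by simp
    then have "\<delta> * (1 + K) \<le> v0 / (1 + K) * (1 + K)" by (rule mult_right_mono) (use K in auto)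
    also have "\<dots> = v0" using K by simp
    finally have \<delta>: "\<delta> > 0" "\<delta> \<le> 1" "\<delta> * (1 + K) \<le> v0" using \<delta>12 by auto
    show ?thesis
    proof (intro exI[of _ \<delta>] conjI allI impI)
      show "\<delta> > 0" by fact
      fix \<phi> assume H: "is_solution (ctrl_field a b c d \<mu> u) unit_square \<phi> \<and> dist (\<phi> 0) (xs, 1) < \<delta>"
      then have sol: "is_solution (ctrl_field a b c d \<mu> u) unit_square \<phi>" and d0: "dist (\<phi> 0) (xs, 1) < \<delta>" by auto
      have "V (\<phi> 0) \<le> dist (\<phi> 0) (xs, 1) * (1 + K)" by (rule init_le) (use d0 \<delta> in auto)
      also have "\<dots> < \<delta> * (1 + K)" by (rule mult_strict_right_mono[OF d0]) (use K in auto)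
      finally have V0: "V (\<phi> 0) < v0" using \<delta> by simp
      define V0 where "V0 = V (\<phi> 0)"
      have bound: "dist (\<phi> t) (xs, 1) \<le> sqrt (V0 * exp (- (\<gamma> * t))) + V0 * exp (- (\<gamma> * t)) / K" if t: "t \<ge> 0" for t
      proof -
        have Vt: "V (\<phi> t) \<le> V0 * exp (- (\<gamma> * t))" using key[OF sol V0] t unfolding V0_def by auto
        have "dist (\<phi> t) (xs, 1) \<le> sqrt (V (\<phi> t)) + V (\<phi> t) / K"
          by (rule dist_le) (use sq[OF sol t] in \<open>auto simp: unit_square_def mem_Times_iff\<close>)
        also have "\<dots> \<le> sqrt (V0 * exp (- (\<gamma> * t))) + V0 * exp (- (\<gamma> * t)) / K"
          using Vt K(1) by (intro add_mono real_sqrt_le_mono divide_right_mono) auto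
        finally show ?thesis .
      qed
      have lim: "((\<lambda>t. sqrt (V0 * exp (- (\<gamma> * t))) + V0 * exp (- (\<gamma> * t)) / K) \<longlongrightarrow> 0) at_top"
      proof -
        have e: "((\<lambda>t. exp (- (\<gamma> * t))) \<longlongrightarrow> 0) at_top" by (rule exp_neg_tendsto[OF \<gamma>(1)])
        have "((\<lambda>t. sqrt (V0 * exp (- (\<gamma> * t))) + V0 * exp (- (\<gamma> * t)) / K) \<longlongrightarrow> sqrt (V0 * 0) + V0 * 0 / K) at_top"
          by (intro tendsto_intros e) (use K in auto)
        then show ?thesis by simp
      qed
      have "((\<lambda>t. dist (\<phi> t) (xs, 1)) \<longlongrightarrow> 0) at_top"
      proof (rule Lim_null_comparison[OF _ lim])
        show "\<forall>\<^sub>F t in at_top. norm (dist (\<phi> t) (xs, 1)) \<le> sqrt (V0 * exp (- (\<gamma> * t))) + V0 * exp (- (\<gamma> * t)) / K"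
          using eventually_ge_at_top[of 0] by eventually_elim (use bound in auto)
      qed
      then show "(\<phi> \<longlongrightarrow> (xs, 1)) at_top" by (subst tendsto_dist_iff)
    qed
  qed
  show ?thesis unfolding loc_asympt_stable_def using lyap attr by blast
qed


theorem lemma19:
  fixes a b c d \<mu> u xs :: real
  assumes "a > 0" "b > 0" "c > 0" "d > 0"
    and "0 < \<mu>" "\<mu> \<le> 1"
    and "u > (c + d) / 2"
    and "1 / 2 < xs" "xs < 1"
    and "equilibrium (ctrl_field a b c d \<mu> u) unit_square (xs, 1)"
  shows "loc_asympt_stable (ctrl_field a b c d \<mu> u) unit_square (xs, 1)
    \<and> (\<forall>p. equilibrium (ctrl_field a b c d \<mu> u) unit_square p \<and> p \<noteq> (xs, 1)
           \<longrightarrow> unstable (ctrl_field a b c d \<mu> u) unit_square p)"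
proof -
  have gxs: "g1 c d \<mu> u xs = 0" using assms(10) field_r1[of a b c d \<mu> u xs]
    unfolding equilibrium_def by simp
  have st: "loc_asympt_stable (ctrl_field a b c d \<mu> u) unit_square (xs, 1)"
    by (rule stable_xs[OF assms(1-5) assms(7-9) gxs])
  have "unstable (ctrl_field a b c d \<mu> u) unit_square p"
    if "equilibrium (ctrl_field a b c d \<mu> u) unit_square p" "p \<noteq> (xs, 1)" for p
  proof -
    obtain x r where p: "p = (x, r)" by fastforce
    have "(r = 0 \<and> 1/2 < x \<and> x \<le> 1) \<or> (r = 1 \<and> 0 \<le> x \<and> x < 1/2)"
      by (rule classify[OF assms(1-5) assms(7-10)]) (use that p in auto)
    then show ?thesis
    proof
      assume "r = 0 \<and> 1/2 < x \<and> x \<le> 1"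
      then show ?thesis unfolding p using unstable_r0[OF assms(5)] by auto
    next
      assume "r = 1 \<and> 0 \<le> x \<and> x < 1/2"
      then show ?thesis unfolding p using unstable_r1[OF assms(5)] by auto
    qed
  qed
  then show ?thesis using st by blast
qed

end
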